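(* Let $R$ be a ring with unit and $C$ an arbitrary chain complex of $R$-modules. (1) Let $h \colon C \to C$ be a chain map. Then the induced map $h_* \colon T(h) \to T(h)$ is chain homotopic to the map "multiplication by $x$" on $T(h)$; in particular $h_*$ is a quasi-isomorphism. (2) Let $g, h \colon C \to C$ be chain homotopic chain maps. Then the mapping tori $T(g)$ and $T(h)$ are isomorphic chain complexes of $R[x,x^{-1}]$-modules.
   Context: For a chain map $f \colon C \to B$, the mapping cone is $\mathrm{Cone}(f)_k = C_{k-1} \oplus B_k$ with differential $(c,b) \mapsto (-\partial c, f(c) + \partial b)$. For a chain map $h \colon C \to C$ of $R$-module complexes, the algebraic mapping torus is the $R[x,x^{-1}]$-module chain complex $T(h) = \mathrm{Cone}\big( h \otimes 1 - 1 \otimes x \colon C \otimes_R R[x,x^{-1}] \to C \otimes_R R[x,x^{-1}] \big)$, where $1 \otimes x$ is right multiplication by $x$ on the second factor. A commutative square $\alpha f = g \alpha$ with $f \colon C \to C$, $g \colon D \to D$, $\alpha \colon C \to D$ induces the $R[x,x^{-1}]$-linear chain map $\alpha_* \colon T(f) \to T(g)$ given by $\alpha \otimes 1$ on both summands; in (1), $h_*$ is the map induced by the square with $\alpha = f = g = h$. *)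

theory Defs
  imports Main "HOL-Library.Poly_Mapping" "HOL-Library.Product_Plus"
begin

text \<open>Laurent polynomial ring R[x,x^-1] is the group ring of the integers over R,
  realised as finitely supported functions int =>0 'r with convolution product.\<close>

type_synonym 'r laurent = "int \<Rightarrow>\<^sub>0 'r"

definition lx :: "'r::ring_1 laurent" where
  "lx = Poly_Mapping.single 1 1"

definition lmodule :: "('s::ring_1 \<Rightarrow> 'm::ab_group_add \<Rightarrow> 'm) \<Rightarrow> 'm set \<Rightarrow> bool" where
  "lmodule sc M \<longleftrightarrow>
     0 \<in> M \<and> (\<forall>x\<in>M. \<forall>y\<in>M. x + y \<in> M) \<and> (\<forall>x\<in>M. - x \<in> M) \<and>
     (\<forall>a. \<forall>x\<in>M. sc a x \<in> M) \<and>
     (\<forall>a. \<forall>x\<in>M. \<forall>y\<in>M. sc a (x + y) = sc a x + sc a y) \<and>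
     (\<forall>a b. \<forall>x\<in>M. sc (a + b) x = sc a x + sc b x) \<and>
     (\<forall>a b. \<forall>x\<in>M. sc (a * b) x = sc a (sc b x)) \<and>
     (\<forall>x\<in>M. sc 1 x = x)"

definition linear_on :: "('s::ring_1 \<Rightarrow> 'm::ab_group_add \<Rightarrow> 'm) \<Rightarrow> ('s \<Rightarrow> 'n::ab_group_add \<Rightarrow> 'n)
    \<Rightarrow> 'm set \<Rightarrow> 'n set \<Rightarrow> ('m \<Rightarrow> 'n) \<Rightarrow> bool" where
  "linear_on sc sc' A B f \<longleftrightarrow>
     (\<forall>x\<in>A. f x \<in> B) \<and> (\<forall>x\<in>A. \<forall>y\<in>A. f (x + y) = f x + f y) \<and>
     (\<forall>a. \<forall>x\<in>A. f (sc a x) = sc' a (f x))"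

definition chain_complex :: "('s::ring_1 \<Rightarrow> 'm::ab_group_add \<Rightarrow> 'm) \<Rightarrow> (int \<Rightarrow> 'm set)
    \<Rightarrow> (int \<Rightarrow> 'm \<Rightarrow> 'm) \<Rightarrow> bool" where
  "chain_complex sc C d \<longleftrightarrow>
     (\<forall>k. lmodule sc (C k)) \<and> (\<forall>k. linear_on sc sc (C k) (C (k - 1)) (d k)) \<and>
     (\<forall>k. \<forall>x\<in>C k. d (k - 1) (d k x) = 0)"

definition chain_map :: "('s::ring_1 \<Rightarrow> 'm::ab_group_add \<Rightarrow> 'm) \<Rightarrow> ('s \<Rightarrow> 'n::ab_group_add \<Rightarrow> 'n)
    \<Rightarrow> (int \<Rightarrow> 'm set) \<Rightarrow> (int \<Rightarrow> 'm \<Rightarrow> 'm) \<Rightarrow> (int \<Rightarrow> 'n set) \<Rightarrow> (int \<Rightarrow> 'n \<Rightarrow> 'n)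
    \<Rightarrow> (int \<Rightarrow> 'm \<Rightarrow> 'n) \<Rightarrow> bool" where
  "chain_map sc sc' C d D e f \<longleftrightarrow>
     (\<forall>k. linear_on sc sc' (C k) (D k) (f k)) \<and>
     (\<forall>k. \<forall>x\<in>C k. e k (f k x) = f (k - 1) (d k x))"

definition chain_homotopic :: "('s::ring_1 \<Rightarrow> 'm::ab_group_add \<Rightarrow> 'm) \<Rightarrow> ('s \<Rightarrow> 'n::ab_group_add \<Rightarrow> 'n)
    \<Rightarrow> (int \<Rightarrow> 'm set) \<Rightarrow> (int \<Rightarrow> 'm \<Rightarrow> 'm) \<Rightarrow> (int \<Rightarrow> 'n set) \<Rightarrow> (int \<Rightarrow> 'n \<Rightarrow> 'n)
    \<Rightarrow> (int \<Rightarrow> 'm \<Rightarrow> 'n) \<Rightarrow> (int \<Rightarrow> 'm \<Rightarrow> 'n) \<Rightarrow> bool" where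
  "chain_homotopic sc sc' C d D e f g \<longleftrightarrow>
     chain_map sc sc' C d D e f \<and> chain_map sc sc' C d D e g \<and>
     (\<exists>s. (\<forall>k. linear_on sc sc' (C k) (D (k + 1)) (s k)) \<and>
          (\<forall>k. \<forall>x\<in>C k. f k x - g k x = e (k + 1) (s k x) + s (k - 1) (d k x)))"

text \<open>Quasi-isomorphism: a chain map whose induced map
  H_k(C) = ker d_k / im d_(k+1)  ->  H_k(D) is bijective for every k
  (surjectivity and injectivity of the induced map on homology, unfolded).\<close>

definition quasi_iso :: "('s::ring_1 \<Rightarrow> 'm::ab_group_add \<Rightarrow> 'm) \<Rightarrow> ('s \<Rightarrow> 'n::ab_group_add \<Rightarrow> 'n)
    \<Rightarrow> (int \<Rightarrow> 'm set) \<Rightarrow> (int \<Rightarrow> 'm \<Rightarrow> 'm) \<Rightarrow> (int \<Rightarrow> 'n set) \<Rightarrow> (int \<Rightarrow> 'n \<Rightarrow> 'n)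
    \<Rightarrow> (int \<Rightarrow> 'm \<Rightarrow> 'n) \<Rightarrow> bool" where
  "quasi_iso sc sc' C d D e f \<longleftrightarrow>
     chain_map sc sc' C d D e f \<and>
     (\<forall>k. \<forall>z\<in>D k. e k z = 0 \<longrightarrow>
          (\<exists>w\<in>C k. d k w = 0 \<and> (\<exists>y\<in>D (k + 1). f k w - z = e (k + 1) y))) \<and>
     (\<forall>k. \<forall>w\<in>C k. d k w = 0 \<longrightarrow> (\<exists>y\<in>D (k + 1). f k w = e (k + 1) y) \<longrightarrow>
          (\<exists>u\<in>C (k + 1). w = d (k + 1) u))"

definition chain_iso :: "('s::ring_1 \<Rightarrow> 'm::ab_group_add \<Rightarrow> 'm) \<Rightarrow> ('s \<Rightarrow> 'n::ab_group_add \<Rightarrow> 'n)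
    \<Rightarrow> (int \<Rightarrow> 'm set) \<Rightarrow> (int \<Rightarrow> 'm \<Rightarrow> 'm) \<Rightarrow> (int \<Rightarrow> 'n set) \<Rightarrow> (int \<Rightarrow> 'n \<Rightarrow> 'n) \<Rightarrow> bool" where
  "chain_iso sc sc' C d D e \<longleftrightarrow>
     (\<exists>f g. chain_map sc sc' C d D e f \<and> chain_map sc' sc D e C d g \<and>
        (\<forall>k. \<forall>x\<in>C k. g k (f k x) = x) \<and> (\<forall>k. \<forall>y\<in>D k. f k (g k y) = y))"

definition cone_C :: "(int \<Rightarrow> 'm set) \<Rightarrow> (int \<Rightarrow> 'm set) \<Rightarrow> int \<Rightarrow> ('m \<times> 'm) set" where
  "cone_C C B k = C (k - 1) \<times> B k"

definition cone_d :: "(int \<Rightarrow> 'm::ab_group_add \<Rightarrow> 'm) \<Rightarrow> (int \<Rightarrow> 'm \<Rightarrow> 'm) \<Rightarrow> (int \<Rightarrow> 'm \<Rightarrow> 'm)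
    \<Rightarrow> int \<Rightarrow> 'm \<times> 'm \<Rightarrow> 'm \<times> 'm" where
  "cone_d d e f k cb = (- d (k - 1) (fst cb), f (k - 1) (fst cb) + e k (snd cb))"

text \<open>Base change C (x)_R R[x,x^-1]: in degree k, Laurent polynomials with
  coefficients in C_k (sum_n c_n x^n), with the R[x,x^-1]-action
  (p . f)_n = sum_(i+j=n) p_i . f_j.\<close>

definition LC :: "(int \<Rightarrow> 'm::zero set) \<Rightarrow> int \<Rightarrow> (int \<Rightarrow>\<^sub>0 'm) set" where
  "LC C k = {f. \<forall>n. Poly_Mapping.lookup f n \<in> C k}"

definition lsc :: "('r::ring_1 \<Rightarrow> 'm::ab_group_add \<Rightarrow> 'm) \<Rightarrow> 'r laurent \<Rightarrow> (int \<Rightarrow>\<^sub>0 'm) \<Rightarrow> (int \<Rightarrow>\<^sub>0 'm)" where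
  "lsc sc p f = (\<Sum>i\<in>Poly_Mapping.keys p. \<Sum>j\<in>Poly_Mapping.keys f. Poly_Mapping.single (i + j) (sc (Poly_Mapping.lookup p i) (Poly_Mapping.lookup f j)))"

text \<open>alpha (x) 1, applied coefficientwise.\<close>

definition lmap :: "('m::zero \<Rightarrow> 'n::zero) \<Rightarrow> (int \<Rightarrow>\<^sub>0 'm) \<Rightarrow> (int \<Rightarrow>\<^sub>0 'n)" where
  "lmap a f = Poly_Mapping.map a f"

text \<open>Algebraic mapping torus T(h) = Cone(h (x) 1 - 1 (x) x).\<close>

definition torus_C :: "(int \<Rightarrow> 'm::zero set) \<Rightarrow> int \<Rightarrow> ((int \<Rightarrow>\<^sub>0 'm) \<times> (int \<Rightarrow>\<^sub>0 'm)) set" where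
  "torus_C C = cone_C (LC C) (LC C)"

definition torus_d :: "('r::ring_1 \<Rightarrow> 'm::ab_group_add \<Rightarrow> 'm) \<Rightarrow> (int \<Rightarrow> 'm \<Rightarrow> 'm) \<Rightarrow> (int \<Rightarrow> 'm \<Rightarrow> 'm)
    \<Rightarrow> int \<Rightarrow> (int \<Rightarrow>\<^sub>0 'm) \<times> (int \<Rightarrow>\<^sub>0 'm) \<Rightarrow> (int \<Rightarrow>\<^sub>0 'm) \<times> (int \<Rightarrow>\<^sub>0 'm)" where
  "torus_d sc d h = cone_d (\<lambda>k. lmap (d k)) (\<lambda>k. lmap (d k))
                           (\<lambda>k c. lmap (h k) c - lsc sc lx c)"

definition tsc :: "('r::ring_1 \<Rightarrow> 'm::ab_group_add \<Rightarrow> 'm) \<Rightarrow> 'r laurent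
    \<Rightarrow> (int \<Rightarrow>\<^sub>0 'm) \<times> (int \<Rightarrow>\<^sub>0 'm) \<Rightarrow> (int \<Rightarrow>\<^sub>0 'm) \<times> (int \<Rightarrow>\<^sub>0 'm)" where
  "tsc sc p cb = (lsc sc p (fst cb), lsc sc p (snd cb))"

text \<open>Map alpha_* : T(f) -> T(g) induced by a commutative square: alpha (x) 1 on both summands.\<close>

definition torus_ind :: "(int \<Rightarrow> 'm::zero \<Rightarrow> 'm) \<Rightarrow> int
    \<Rightarrow> (int \<Rightarrow>\<^sub>0 'm) \<times> (int \<Rightarrow>\<^sub>0 'm) \<Rightarrow> (int \<Rightarrow>\<^sub>0 'm) \<times> (int \<Rightarrow>\<^sub>0 'm)" where
  "torus_ind a k cb = (lmap (a (k - 1)) (fst cb), lmap (a k) (snd cb))"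

end

theory Submission imports Defs begin

lemma lm_sc0: assumes "lmodule sc M" shows "sc a 0 = 0"
proof -
  have "0 \<in> M" using assms by (simp add: lmodule_def)
  then have "sc a (0+0) = sc a 0 + sc a 0" using assms unfolding lmodule_def by blast
  then show ?thesis by simp
qed

lemma lm_0sc: assumes "lmodule sc M" "x \<in> M" shows "sc 0 x = 0"
proof -
  have "sc (0+0) x = sc 0 x + sc 0 x" using assms unfolding lmodule_def by blast
  then show ?thesis by simp
qed

lemma lm_closed: assumes "lmodule sc M"
  shows "0 \<in> M" "x \<in> M \<Longrightarrow> y \<in> M \<Longrightarrow> x + y \<in> M" "x \<in> M \<Longrightarrow> - x \<in> M"
    "x \<in> M \<Longrightarrow> y \<in> M \<Longrightarrow> x - y \<in> M" "x \<in> M \<Longrightarrow> sc a x \<in> M"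
proof -
  show "0 \<in> M" using assms unfolding lmodule_def by blast
  show "x \<in> M \<Longrightarrow> y \<in> M \<Longrightarrow> x + y \<in> M" using assms unfolding lmodule_def by blast
  show "x \<in> M \<Longrightarrow> - x \<in> M" using assms unfolding lmodule_def by blast
  show "x \<in> M \<Longrightarrow> y \<in> M \<Longrightarrow> x - y \<in> M"
    using assms unfolding lmodule_def diff_conv_add_uminus by blast
  show "x \<in> M \<Longrightarrow> sc a x \<in> M" using assms unfolding lmodule_def by blast
qed

lemma lm_sum: assumes "lmodule sc M" "\<And>i. i \<in> A \<Longrightarrow> g i \<in> M" shows "sum g A \<in> M"
  using assms(2)
  by (induction A rule: infinite_finite_induct) (auto intro: lm_closed[OF assms(1)])

lemma lm_add: "lmodule sc M \<Longrightarrow> x \<in> M \<Longrightarrow> y \<in> M \<Longrightarrow> sc a (x + y) = sc a x + sc a y"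
  by (simp add: lmodule_def)

lemma lm_diff: assumes "lmodule sc M" "x \<in> M" "y \<in> M" shows "sc a (x - y) = sc a x - sc a y"
proof -
  have "x - y \<in> M" using lm_closed assms by blast
  then have "sc a (x - y + y) = sc a (x - y) + sc a y" using assms lm_add by blast
  then show ?thesis by (simp add: algebra_simps)
qed

lemma lin_add: "linear_on sc sc' A B f \<Longrightarrow> x \<in> A \<Longrightarrow> y \<in> A \<Longrightarrow> f (x + y) = f x + f y"
  by (simp add: linear_on_def)

lemma lin_in: "linear_on sc sc' A B f \<Longrightarrow> x \<in> A \<Longrightarrow> f x \<in> B"
  by (simp add: linear_on_def)

lemma lin_sc: "linear_on sc sc' A B f \<Longrightarrow> x \<in> A \<Longrightarrow> f (sc a x) = sc' a (f x)"
  by (simp add: linear_on_def)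

lemma lin_0: assumes "linear_on sc sc' A B f" "lmodule sc A" shows "f 0 = 0"
proof -
  have "0 \<in> A" using assms lm_closed by blast
  then have "f (0 + 0) = f 0 + f 0" using lin_add assms by blast
  then show ?thesis by simp
qed

lemma lin_diff: assumes "linear_on sc sc' A B f" "lmodule sc A" "x \<in> A" "y \<in> A"
  shows "f (x - y) = f x - f y"
proof -
  have "x - y \<in> A" using lm_closed assms by blast
  then have "f (x - y + y) = f (x - y) + f y" using assms lin_add by blast
  then show ?thesis by (simp add: algebra_simps)
qed

lemma lin_neg: assumes "linear_on sc sc' A B f" "lmodule sc A" "x \<in> A"
  shows "f (- x) = - f x"
  using lin_diff[OF assms(1,2) lm_closed(1)[OF assms(2)] assms(3)] lin_0[OF assms(1,2)] by simp

lemma lin_sum: assumes "linear_on sc sc' A B f" "lmodule sc A" "\<And>i. i \<in> I \<Longrightarrow> g i \<in> A"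
  shows "f (sum g I) = (\<Sum>i\<in>I. f (g i))"
  using assms(3)
proof (induction I rule: infinite_finite_induct)
  case (infinite A) then show ?case using lin_0[OF assms(1,2)] by simp
next
  case empty then show ?case using lin_0[OF assms(1,2)] by simp
next
  case (insert x F)
  have "sum g F \<in> A" using insert.prems by (intro lm_sum[OF assms(2)]) auto
  then show ?case using insert lin_add[OF assms(1)] by simp
qed

lemma lookup_lmap: "a 0 = 0 \<Longrightarrow> Poly_Mapping.lookup (lmap a f) n = a (Poly_Mapping.lookup f n)"
  by (simp add: lmap_def Poly_Mapping.map.rep_eq when_def)


lemma lookup_lsc: assumes "lmodule sc M" "\<And>n. Poly_Mapping.lookup f n \<in> M"
  shows "Poly_Mapping.lookup (lsc sc p f) n
     = (\<Sum>i\<in>Poly_Mapping.keys p. sc (Poly_Mapping.lookup p i) (Poly_Mapping.lookup f (n - i)))"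
proof -
  have "Poly_Mapping.lookup (lsc sc p f) n = (\<Sum>i\<in>Poly_Mapping.keys p. \<Sum>j\<in>Poly_Mapping.keys f.
     (if j = n - i then sc (Poly_Mapping.lookup p i) (Poly_Mapping.lookup f j) else 0))"
    unfolding lsc_def lookup_sum lookup_single when_def
    by (intro sum.cong refl) auto
  also have "\<dots> = (\<Sum>i\<in>Poly_Mapping.keys p. sc (Poly_Mapping.lookup p i) (Poly_Mapping.lookup f (n - i)))"
    apply (intro sum.cong refl)
    apply (subst sum.delta)
    using lm_sc0[OF assms(1)] by (auto simp: in_keys_iff)
  finally show ?thesis .
qed

lemma LC_iff: "f \<in> LC C k \<longleftrightarrow> (\<forall>n. Poly_Mapping.lookup f n \<in> C k)"
  by (simp add: LC_def)

lemma lsc_zero[simp]: "lsc sc p 0 = 0"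
  by (simp add: lsc_def)

lemma lmap_zero[simp]: "lmap a 0 = 0"
  by (rule poly_mapping_eqI) (simp add: lmap_def Poly_Mapping.map.rep_eq when_def)

lemma lookup_lmap0: "a 0 = 0 \<Longrightarrow> Poly_Mapping.lookup (lmap a f) n = a (Poly_Mapping.lookup f n)"
  by (rule lookup_lmap)

lemma lookup_lsc_single: assumes "lmodule sc M" "\<And>n. Poly_Mapping.lookup f n \<in> M"
  shows "Poly_Mapping.lookup (lsc sc (Poly_Mapping.single m 1) f) n = Poly_Mapping.lookup f (n - m)"
  using assms lookup_lsc[OF assms] by (simp add: lmodule_def)

lemma lookup_lsc_lx: assumes "lmodule sc M" "\<And>n. Poly_Mapping.lookup f n \<in> M"
  shows "Poly_Mapping.lookup (lsc sc lx f) n = Poly_Mapping.lookup f (n - 1)"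
  unfolding lx_def by (rule lookup_lsc_single[OF assms])

lemma lsc_in: assumes "lmodule sc M" "\<And>n. Poly_Mapping.lookup f n \<in> M"
  shows "Poly_Mapping.lookup (lsc sc p f) n \<in> M"
  unfolding lookup_lsc[OF assms] by (rule lm_sum[OF assms(1)]) (simp add: lm_closed(5)[OF assms(1) assms(2)])

lemma lsc_add: assumes "lmodule sc M" "\<And>n. Poly_Mapping.lookup f n \<in> M" "\<And>n. Poly_Mapping.lookup g n \<in> M"
  shows "lsc sc p (f + g) = lsc sc p f + lsc sc p g"
proof (rule poly_mapping_eqI)
  fix n
  have fg: "\<And>n. Poly_Mapping.lookup (f + g) n \<in> M" using assms lm_closed(2)[OF assms(1)] by (simp add: lookup_add)
  show "Poly_Mapping.lookup (lsc sc p (f + g)) n = Poly_Mapping.lookup (lsc sc p f + lsc sc p g) n"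
    unfolding lookup_add lookup_lsc[OF assms(1) fg] lookup_lsc[OF assms(1,2)] lookup_lsc[OF assms(1,3)]
    by (simp add: lm_add[OF assms(1) assms(2) assms(3)] sum.distrib)
qed

lemma lsc_diff: assumes "lmodule sc M" "\<And>n. Poly_Mapping.lookup f n \<in> M" "\<And>n. Poly_Mapping.lookup g n \<in> M"
  shows "lsc sc p (f - g) = lsc sc p f - lsc sc p g"
proof (rule poly_mapping_eqI)
  fix n
  have fg: "\<And>n. Poly_Mapping.lookup (f - g) n \<in> M" using assms lm_closed(4)[OF assms(1)] by (simp add: lookup_minus)
  show "Poly_Mapping.lookup (lsc sc p (f - g)) n = Poly_Mapping.lookup (lsc sc p f - lsc sc p g) n"
    unfolding lookup_minus lookup_lsc[OF assms(1) fg] lookup_lsc[OF assms(1,2)] lookup_lsc[OF assms(1,3)]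
    by (simp add: lm_diff[OF assms(1) assms(2) assms(3)] sum_subtractf)
qed

lemma lsc_neg: assumes "lmodule sc M" "\<And>n. Poly_Mapping.lookup f n \<in> M"
  shows "lsc sc p (- f) = - lsc sc p f"
  using lsc_diff[OF assms(1), of 0 f p] assms lm_closed(1)[OF assms(1)] by simp

lemma lmap_in: assumes "linear_on sc sc A B a" "lmodule sc A" "\<And>n. Poly_Mapping.lookup f n \<in> A"
  shows "Poly_Mapping.lookup (lmap a f) n \<in> B"
  using lin_0[OF assms(1,2)] lin_in[OF assms(1) assms(3)] by (simp add: lookup_lmap0)

lemma lmap_add: assumes "linear_on sc sc A B a" "lmodule sc A" "\<And>n. Poly_Mapping.lookup f n \<in> A"
   "\<And>n. Poly_Mapping.lookup g n \<in> A"
  shows "lmap a (f + g) = lmap a f + lmap a g"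
  by (rule poly_mapping_eqI) (simp add: lin_0[OF assms(1,2)] lookup_lmap0 lookup_add lin_add[OF assms(1) assms(3,4)])

lemma lmap_diff: assumes "linear_on sc sc A B a" "lmodule sc A" "\<And>n. Poly_Mapping.lookup f n \<in> A"
   "\<And>n. Poly_Mapping.lookup g n \<in> A"
  shows "lmap a (f - g) = lmap a f - lmap a g"
  by (rule poly_mapping_eqI) (simp add: lin_0[OF assms(1,2)] lookup_lmap0 lookup_minus lin_diff[OF assms(1,2) assms(3,4)])

lemma lmap_neg: assumes "linear_on sc sc A B a" "lmodule sc A" "\<And>n. Poly_Mapping.lookup f n \<in> A"
  shows "lmap a (- f) = - lmap a f"
  by (rule poly_mapping_eqI) (simp add: lin_0[OF assms(1,2)] lookup_lmap0 lin_neg[OF assms(1,2) assms(3)])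

lemma lmap_lsc: assumes "linear_on sc sc A B a" "lmodule sc A" "lmodule sc B" "\<And>n. Poly_Mapping.lookup f n \<in> A"
  shows "lmap a (lsc sc p f) = lsc sc p (lmap a f)"
proof (rule poly_mapping_eqI)
  fix n
  have af: "\<And>n. Poly_Mapping.lookup (lmap a f) n \<in> B" using lmap_in[OF assms(1,2,4)] .
  show "Poly_Mapping.lookup (lmap a (lsc sc p f)) n = Poly_Mapping.lookup (lsc sc p (lmap a f)) n"
    unfolding lookup_lmap0[where a=a, OF lin_0[OF assms(1,2)]] lookup_lsc[OF assms(3) af] lookup_lsc[OF assms(2,4)]
    by (subst lin_sum[OF assms(1,2)]) (auto simp: lm_closed(5)[OF assms(2) assms(4)] lin_sc[OF assms(1) assms(4)])
qed

lemma lsc_lsc_shift: assumes "lmodule sc M" "\<And>n. Poly_Mapping.lookup f n \<in> M"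
  shows "lsc sc p (lsc sc (Poly_Mapping.single m 1) f) = lsc sc (Poly_Mapping.single m 1) (lsc sc p f)"
proof (rule poly_mapping_eqI)
  fix n
  have a: "\<And>n. Poly_Mapping.lookup (lsc sc p f) n \<in> M" "\<And>n. Poly_Mapping.lookup (lsc sc (Poly_Mapping.single m 1) f) n \<in> M"
    using lsc_in[OF assms] by auto
  show "Poly_Mapping.lookup (lsc sc p (lsc sc (Poly_Mapping.single m 1) f)) n = Poly_Mapping.lookup (lsc sc (Poly_Mapping.single m 1) (lsc sc p f)) n"
    unfolding lookup_lsc_single[OF assms(1) a(1)] lookup_lsc[OF assms(1) a(2)] lookup_lsc[OF assms]
      lookup_lsc_single[OF assms]
    using assms by (simp add: algebra_simps lmodule_def)
qed


context
  fixes sc :: "'r::ring_1 \<Rightarrow> 'm::ab_group_add \<Rightarrow> 'm" and C :: "int \<Rightarrow> 'm set" and d :: "int \<Rightarrow> 'm \<Rightarrow> 'm"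
  assumes cc: "chain_complex sc C d"
begin

lemma lm: "lmodule sc (C k)" using cc by (simp add: chain_complex_def)
lemma dlin: "linear_on sc sc (C k) (C (k - 1)) (d k)" using cc by (simp add: chain_complex_def)
lemma dd: "x \<in> C k \<Longrightarrow> d (k - 1) (d k x) = 0" using cc by (simp add: chain_complex_def)

lemma LC_add: "f \<in> LC C k \<Longrightarrow> g \<in> LC C k \<Longrightarrow> f + g \<in> LC C k"
  by (simp add: LC_iff lookup_add lm_closed(2)[OF lm])
lemma LC_diff: "f \<in> LC C k \<Longrightarrow> g \<in> LC C k \<Longrightarrow> f - g \<in> LC C k"
  by (simp add: LC_iff lookup_minus lm_closed(4)[OF lm])
lemma LC_neg: "f \<in> LC C k \<Longrightarrow> - f \<in> LC C k"
  by (simp add: LC_iff lm_closed(3)[OF lm])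
lemma LC_zero: "0 \<in> LC C k"
  by (simp add: LC_iff lm_closed(1)[OF lm])
lemma LC_lsc: "f \<in> LC C k \<Longrightarrow> lsc sc p f \<in> LC C k"
  by (simp add: LC_iff lsc_in[OF lm])
lemma LC_lmap: "linear_on sc sc (C i) (C j) a \<Longrightarrow> f \<in> LC C i \<Longrightarrow> lmap a f \<in> LC C j"
  by (simp add: LC_iff lmap_in[OF _ lm])

lemma lsc_add': "f \<in> LC C k \<Longrightarrow> g \<in> LC C k \<Longrightarrow> lsc sc p (f + g) = lsc sc p f + lsc sc p g"
  by (rule lsc_add[OF lm]) (auto simp: LC_iff)
lemma lsc_diff': "f \<in> LC C k \<Longrightarrow> g \<in> LC C k \<Longrightarrow> lsc sc p (f - g) = lsc sc p f - lsc sc p g"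
  by (rule lsc_diff[OF lm]) (auto simp: LC_iff)
lemma lsc_neg': "f \<in> LC C k \<Longrightarrow> lsc sc p (- f) = - lsc sc p f"
  by (rule lsc_neg[OF lm]) (auto simp: LC_iff)
lemma lmap_add': "linear_on sc sc (C i) (C j) a \<Longrightarrow> f \<in> LC C i \<Longrightarrow> g \<in> LC C i \<Longrightarrow> lmap a (f + g) = lmap a f + lmap a g"
  by (rule lmap_add[OF _ lm]) (auto simp: LC_iff)
lemma lmap_diff': "linear_on sc sc (C i) (C j) a \<Longrightarrow> f \<in> LC C i \<Longrightarrow> g \<in> LC C i \<Longrightarrow> lmap a (f - g) = lmap a f - lmap a g"
  by (rule lmap_diff[OF _ lm]) (auto simp: LC_iff)
lemma lmap_neg': "linear_on sc sc (C i) (C j) a \<Longrightarrow> f \<in> LC C i \<Longrightarrow> lmap a (- f) = - lmap a f"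
  by (rule lmap_neg[OF _ lm]) (auto simp: LC_iff)
lemma lmap_lsc': "linear_on sc sc (C i) (C j) a \<Longrightarrow> f \<in> LC C i \<Longrightarrow> lmap a (lsc sc p f) = lsc sc p (lmap a f)"
  by (rule lmap_lsc[OF _ lm lm]) (auto simp: LC_iff)
lemma lsc_lx_comm: "f \<in> LC C k \<Longrightarrow> lsc sc p (lsc sc lx f) = lsc sc lx (lsc sc p f)"
  unfolding lx_def by (rule lsc_lsc_shift[OF lm]) (auto simp: LC_iff)
lemma lookup_lx': "f \<in> LC C k \<Longrightarrow> Poly_Mapping.lookup (lsc sc lx f) n = Poly_Mapping.lookup f (n - 1)"
  by (rule lookup_lsc_lx[OF lm]) (auto simp: LC_iff)
lemma lookup_shift': "f \<in> LC C k \<Longrightarrow> Poly_Mapping.lookup (lsc sc (Poly_Mapping.single m 1) f) n = Poly_Mapping.lookup f (n - m)"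
  by (rule lookup_lsc_single[OF lm]) (auto simp: LC_iff)

lemma torus_C_iff: "x \<in> torus_C C k \<longleftrightarrow> fst x \<in> LC C (k - 1) \<and> snd x \<in> LC C k"
  by (cases x) (simp add: torus_C_def cone_C_def)

lemma D_eq: "torus_d sc d h k (c, b) = (- lmap (d (k - 1)) c, lmap (h (k - 1)) c - lsc sc lx c + lmap (d k) b)"
  by (simp add: torus_d_def cone_d_def)


lemma d0[simp]: "d k 0 = 0" by (rule lin_0[OF dlin lm])

lemma lmap_comp: "a 0 = 0 \<Longrightarrow> b 0 = 0 \<Longrightarrow> lmap a (lmap b f) = lmap (\<lambda>x. a (b x)) f"
  by (rule poly_mapping_eqI) (simp add: lookup_lmap0)

lemma lmap_cong: "a 0 = 0 \<Longrightarrow> b 0 = 0 \<Longrightarrow> f \<in> LC C k \<Longrightarrow> (\<And>x. x \<in> C k \<Longrightarrow> a x = b x) \<Longrightarrow> lmap a f = lmap b f"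
  by (rule poly_mapping_eqI) (simp add: lookup_lmap0 LC_iff)

lemma pair_cases_T: assumes "x \<in> torus_C C k"
  obtains c b where "x = (c, b)" "c \<in> LC C (k - 1)" "b \<in> LC C k"
  using assms by (cases x) (auto simp: torus_C_iff)

context
  fixes h assumes hl: "\<And>k. linear_on sc sc (C k) (C k) (h k)"
    and hc: "\<And>k x. x \<in> C k \<Longrightarrow> d k (h k x) = h (k - 1) (d k x)"
begin

lemma h0[simp]: "h k 0 = 0" by (rule lin_0[OF hl lm])

lemma D_in: "c \<in> LC C (k - 1) \<Longrightarrow> b \<in> LC C k \<Longrightarrow> torus_d sc d h k (c, b) \<in> torus_C C (k - 1)"
  unfolding torus_C_iff D_eq fst_conv snd_conv
  by (intro conjI LC_add LC_diff LC_neg LC_lmap[OF dlin] LC_lmap[OF hl] LC_lsc)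

lemma D_tsc: assumes c: "c \<in> LC C (k - 1)" and b: "b \<in> LC C k"
  shows "torus_d sc d h k (tsc sc p (c, b)) = tsc sc p (torus_d sc d h k (c, b))"
proof -
  have m1: "lmap (d (k - 1)) c \<in> LC C (k - 1 - 1)" by (rule LC_lmap[OF dlin c])
  have m2: "lmap (h (k - 1)) c \<in> LC C (k - 1)" by (rule LC_lmap[OF hl c])
  have m3: "lsc sc lx c \<in> LC C (k - 1)" by (rule LC_lsc[OF c])
  have m4: "lmap (d k) b \<in> LC C (k - 1)" by (rule LC_lmap[OF dlin b])
  have m5: "lmap (h (k - 1)) c - lsc sc lx c \<in> LC C (k - 1)" by (rule LC_diff[OF m2 m3])
  show ?thesis
    unfolding tsc_def fst_conv snd_conv D_eq
    by (simp add: lmap_lsc'[OF dlin c] lmap_lsc'[OF hl c] lmap_lsc'[OF dlin b] lsc_neg'[OF m1]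
        lsc_add'[OF m5 m4] lsc_diff'[OF m2 m3] lsc_lx_comm[OF c])
qed

lemma D_diff: assumes c: "c \<in> LC C (k - 1)" and b: "b \<in> LC C k"
  and c': "c' \<in> LC C (k - 1)" and b': "b' \<in> LC C k"
  shows "torus_d sc d h k ((c, b) - (c', b')) = torus_d sc d h k (c, b) - torus_d sc d h k (c', b')"
  unfolding diff_Pair D_eq
  by (simp add: lmap_diff'[OF dlin c c'] lmap_diff'[OF hl c c'] lmap_diff'[OF dlin b b']
      lsc_diff'[OF c c'] algebra_simps)

lemma ind_eq: "torus_ind h k (c, b) = (lmap (h (k - 1)) c, lmap (h k) b)"
  by (simp add: torus_ind_def)

lemma ind_chain: "chain_map (tsc sc) (tsc sc) (torus_C C) (torus_d sc d h) (torus_C C) (torus_d sc d h) (torus_ind h)"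
  unfolding chain_map_def linear_on_def
proof (intro allI conjI ballI)
  fix k x assume "x \<in> torus_C C k"
  then obtain c b where x: "x = (c, b)" and c: "c \<in> LC C (k - 1)" and b: "b \<in> LC C k"
    by (rule pair_cases_T)
  show "torus_ind h k x \<in> torus_C C k"
    unfolding x ind_eq torus_C_iff fst_conv snd_conv
    by (intro conjI LC_lmap[OF hl] c b)
  fix p show "torus_ind h k (tsc sc p x) = tsc sc p (torus_ind h k x)"
    unfolding x tsc_def fst_conv snd_conv ind_eq
    by (simp add: lmap_lsc'[OF hl c] lmap_lsc'[OF hl b])
next
  fix k x y assume "x \<in> torus_C C k" "y \<in> torus_C C k"
  then obtain c b c' b' where x: "x = (c, b)" and c: "c \<in> LC C (k - 1)" and b: "b \<in> LC C k"
    and y: "y = (c', b')" and c': "c' \<in> LC C (k - 1)" and b': "b' \<in> LC C k"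
    by (metis pair_cases_T)
  show "torus_ind h k (x + y) = torus_ind h k x + torus_ind h k y"
    unfolding x y add_Pair ind_eq
    by (simp add: lmap_add'[OF hl c c'] lmap_add'[OF hl b b'])
next
  fix k x assume "x \<in> torus_C C k"
  then obtain c b where x: "x = (c, b)" and c: "c \<in> LC C (k - 1)" and b: "b \<in> LC C k"
    by (rule pair_cases_T)
  have m1: "lmap (d (k - 1)) c \<in> LC C (k - 1 - 1)" by (rule LC_lmap[OF dlin c])
  have m2: "lmap (h (k - 1)) c \<in> LC C (k - 1)" by (rule LC_lmap[OF hl c])
  have m3: "lsc sc lx c \<in> LC C (k - 1)" by (rule LC_lsc[OF c])
  have m4: "lmap (d k) b \<in> LC C (k - 1)" by (rule LC_lmap[OF dlin b])
  have e1: "lmap (d (k - 1)) (lmap (h (k - 1)) c) = lmap (h (k - 1 - 1)) (lmap (d (k - 1)) c)"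
    by (simp add: lmap_comp) (rule lmap_cong[OF _ _ c]; simp add: hc)
  have e2: "lmap (d k) (lmap (h k) b) = lmap (h (k - 1)) (lmap (d k) b)"
    by (simp add: lmap_comp) (rule lmap_cong[OF _ _ b]; simp add: hc)
  show "torus_d sc d h k (torus_ind h k x) = torus_ind h (k - 1) (torus_d sc d h k x)"
    unfolding x ind_eq D_eq
    by (simp add: e1 e2 lmap_neg'[OF hl m1, simplified] lmap_add'[OF hl LC_diff[OF m2 m3] m4]
        lmap_diff'[OF hl m2 m3] lmap_lsc'[OF hl c])
qed


lemma tsc_zero[simp]: "tsc sc p 0 = 0"
  by (simp add: tsc_def zero_prod_def)

lemma lx_chain: "chain_map (tsc sc) (tsc sc) (torus_C C) (torus_d sc d h) (torus_C C) (torus_d sc d h) (\<lambda>k. tsc sc lx)"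
  unfolding chain_map_def linear_on_def
proof (intro allI conjI ballI)
  fix k x assume "x \<in> torus_C C k"
  then obtain c b where x: "x = (c, b)" and c: "c \<in> LC C (k - 1)" and b: "b \<in> LC C k"
    by (rule pair_cases_T)
  show "tsc sc lx x \<in> torus_C C k"
    unfolding x tsc_def torus_C_iff fst_conv snd_conv
    by (intro conjI LC_lsc c b)
  fix p show "tsc sc lx (tsc sc p x) = tsc sc p (tsc sc lx x)"
    unfolding x tsc_def fst_conv snd_conv
    by (simp add: lsc_lx_comm[OF c] lsc_lx_comm[OF b])
next
  fix k x y assume "x \<in> torus_C C k" "y \<in> torus_C C k"
  then obtain c b c' b' where x: "x = (c, b)" and c: "c \<in> LC C (k - 1)" and b: "b \<in> LC C k"
    and y: "y = (c', b')" and c': "c' \<in> LC C (k - 1)" and b': "b' \<in> LC C k"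
    by (metis pair_cases_T)
  show "tsc sc lx (x + y) = tsc sc lx x + tsc sc lx y"
    unfolding x y add_Pair tsc_def fst_conv snd_conv
    by (simp add: lsc_add'[OF c c'] lsc_add'[OF b b'])
next
  fix k x assume "x \<in> torus_C C k"
  then obtain c b where x: "x = (c, b)" and c: "c \<in> LC C (k - 1)" and b: "b \<in> LC C k"
    by (rule pair_cases_T)
  show "torus_d sc d h k (tsc sc lx x) = tsc sc lx (torus_d sc d h k x)"
    unfolding x by (rule D_tsc[OF c b])
qed

definition hs :: "int \<Rightarrow> (int \<Rightarrow>\<^sub>0 'm) \<times> (int \<Rightarrow>\<^sub>0 'm) \<Rightarrow> (int \<Rightarrow>\<^sub>0 'm) \<times> (int \<Rightarrow>\<^sub>0 'm)"
  where "hs k x = (snd x, 0)"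

lemma hs_lin: "linear_on (tsc sc) (tsc sc) (torus_C C k) (torus_C C (k + 1)) (hs k)"
  unfolding linear_on_def
proof (intro allI conjI ballI)
  fix x assume "x \<in> torus_C C k"
  then show "hs k x \<in> torus_C C (k + 1)" by (simp add: hs_def torus_C_iff LC_zero)
next
  fix x y show "hs k (x + y) = hs k x + hs k y" by (simp add: hs_def)
next
  fix p x show "hs k (tsc sc p x) = tsc sc p (hs k x)" by (simp add: hs_def tsc_def)
qed

lemma htpy_eq: assumes c: "c \<in> LC C (k - 1)" and b: "b \<in> LC C k"
  shows "torus_ind h k (c, b) - tsc sc lx (c, b)
    = torus_d sc d h (k + 1) (hs k (c, b)) + hs (k - 1) (torus_d sc d h k (c, b))"
  by (simp add: hs_def ind_eq D_eq tsc_def algebra_simps)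

definition xinv :: "'r laurent" where "xinv = Poly_Mapping.single (-1) 1"

lemma lx_xinv: assumes "f \<in> LC C k" shows "lsc sc lx (lsc sc xinv f) = f"
  by (rule poly_mapping_eqI) (simp add: lookup_lx'[OF LC_lsc[OF assms]] xinv_def lookup_shift'[OF assms])

lemma xinv_lx: assumes "f \<in> LC C k" shows "lsc sc xinv (lsc sc lx f) = f"
  by (rule poly_mapping_eqI) (simp add: lookup_lx'[OF assms] xinv_def lookup_shift'[OF LC_lsc[OF assms]])

lemma ind_quasi: "quasi_iso (tsc sc) (tsc sc) (torus_C C) (torus_d sc d h) (torus_C C) (torus_d sc d h) (torus_ind h)"
  unfolding quasi_iso_def
proof (intro conjI allI ballI impI ind_chain)
  fix k z assume zT: "z \<in> torus_C C k" and z0: "torus_d sc d h k z = 0"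
  obtain c b where z: "z = (c, b)" and c: "c \<in> LC C (k - 1)" and b: "b \<in> LC C k"
    using zT by (rule pair_cases_T)
  define w where "w = tsc sc xinv z"
  have wz: "w = (lsc sc xinv c, lsc sc xinv b)" by (simp add: w_def z tsc_def)
  have c1: "lsc sc xinv c \<in> LC C (k - 1)" and b1: "lsc sc xinv b \<in> LC C k" using LC_lsc c b by auto
  have wT: "w \<in> torus_C C k" by (simp add: wz torus_C_iff c1 b1)
  have Dw: "torus_d sc d h k w = 0"
    using D_tsc[OF c b, of xinv] z0 by (simp add: w_def z)
  have zw: "tsc sc lx w = z" by (simp add: wz z tsc_def lx_xinv[OF c] lx_xinv[OF b])
  have yT: "hs k w \<in> torus_C C (k + 1)" using hs_lin wT by (simp add: linear_on_def)
  have "torus_ind h k w - z = torus_d sc d h (k + 1) (hs k w)"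
    using htpy_eq[OF c1 b1] Dw zw by (simp add: wz hs_def zero_prod_def)
  then show "\<exists>w\<in>torus_C C k. torus_d sc d h k w = 0 \<and>
      (\<exists>y\<in>torus_C C (k + 1). torus_ind h k w - z = torus_d sc d h (k + 1) y)"
    using wT Dw yT by blast
next
  fix k w assume wT: "w \<in> torus_C C k" and Dw: "torus_d sc d h k w = 0"
    and "\<exists>y\<in>torus_C C (k + 1). torus_ind h k w = torus_d sc d h (k + 1) y"
  then obtain y where yT: "y \<in> torus_C C (k + 1)" and iw: "torus_ind h k w = torus_d sc d h (k + 1) y"
    by blast
  obtain c b where w: "w = (c, b)" and c: "c \<in> LC C (k - 1)" and b: "b \<in> LC C k"
    using wT by (rule pair_cases_T)
  obtain c0 b0 where y: "y = (c0, b0)" and c0: "c0 \<in> LC C (k + 1 - 1)" and b0: "b0 \<in> LC C (k + 1)"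
    using yT by (rule pair_cases_T)
  have b': "b \<in> LC C (k + 1 - 1)" using b by simp
  have z0: "(0 :: int \<Rightarrow>\<^sub>0 'm) \<in> LC C (k + 1)" by (rule LC_zero)
  have dd1: "torus_d sc d h (k + 1) (y - hs k w) = torus_d sc d h (k + 1) y - torus_d sc d h (k + 1) (hs k w)"
    unfolding y w hs_def snd_conv by (rule D_diff[OF c0 b0 b' z0])
  have hs0: "hs (k - 1) 0 = 0" by (simp add: hs_def zero_prod_def)
  have h1: "torus_ind h k w - tsc sc lx w = torus_d sc d h (k + 1) (hs k w)"
    using htpy_eq[OF c b] Dw hs0 unfolding w by simp
  have e: "tsc sc lx w = torus_d sc d h (k + 1) (y - hs k w)"
    unfolding dd1 iw[symmetric] h1[symmetric] by simp
  define u where "u = tsc sc xinv (y - hs k w)"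
  have u: "u = (lsc sc xinv (c0 - b), lsc sc xinv (b0 - 0))" by (simp add: u_def y w hs_def tsc_def)
  have uT: "u \<in> torus_C C (k + 1)" unfolding u torus_C_iff fst_conv snd_conv
    by (intro conjI LC_lsc LC_diff c0 b' b0 z0)
  have "torus_d sc d h (k + 1) u = tsc sc xinv (torus_d sc d h (k + 1) (y - hs k w))"
    unfolding u_def y w hs_def snd_conv diff_Pair
    by (rule D_tsc[OF LC_diff[OF c0 b'] LC_diff[OF b0 z0]])
  also have "\<dots> = tsc sc xinv (tsc sc lx w)" by (simp only: e)
  also have "\<dots> = w" unfolding w tsc_def fst_conv snd_conv
    by (simp add: xinv_lx[OF c] xinv_lx[OF b])
  finally show "\<exists>u\<in>torus_C C (k + 1). w = torus_d sc d h (k + 1) u" using uT by metis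
qed

end


context
  fixes g h s
  assumes gl: "\<And>k. linear_on sc sc (C k) (C k) (g k)"
    and hl: "\<And>k. linear_on sc sc (C k) (C k) (h k)"
    and sl: "\<And>k. linear_on sc sc (C k) (C (k + 1)) (s k)"
    and seq: "\<And>k x. x \<in> C k \<Longrightarrow> g k x - h k x = d (k + 1) (s k x) + s (k - 1) (d k x)"
begin

lemma g0'[simp]: "g k 0 = 0" by (rule lin_0[OF gl lm])
lemma h0'[simp]: "h k 0 = 0" by (rule lin_0[OF hl lm])
lemma s0[simp]: "s k 0 = 0" by (rule lin_0[OF sl lm])

lemma key: assumes x: "x \<in> C (k - 1)"
  shows "h (k - 1) x + d k (s (k - 1) x) = g (k - 1) x + s (k - 1 - 1) (- d (k - 1) x)"
proof -
  have dx: "d (k - 1) x \<in> C (k - 1 - 1)" by (rule lin_in[OF dlin x])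
  have "g (k - 1) x - h (k - 1) x = d k (s (k - 1) x) + s (k - 1 - 1) (d (k - 1) x)"
    using seq[OF x] by simp
  moreover have "s (k - 1 - 1) (- d (k - 1) x) = - s (k - 1 - 1) (d (k - 1) x)"
    by (rule lin_neg[OF sl lm dx])
  ultimately show ?thesis by (simp add: algebra_simps)
qed

definition Fm :: "int \<Rightarrow> (int \<Rightarrow>\<^sub>0 'm) \<times> (int \<Rightarrow>\<^sub>0 'm) \<Rightarrow> (int \<Rightarrow>\<^sub>0 'm) \<times> (int \<Rightarrow>\<^sub>0 'm)"
  where "Fm k x = (fst x, snd x + lmap (s (k - 1)) (fst x))"
definition Gm :: "int \<Rightarrow> (int \<Rightarrow>\<^sub>0 'm) \<times> (int \<Rightarrow>\<^sub>0 'm) \<Rightarrow> (int \<Rightarrow>\<^sub>0 'm) \<times> (int \<Rightarrow>\<^sub>0 'm)"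
  where "Gm k x = (fst x, snd x - lmap (s (k - 1)) (fst x))"

lemma sl': "linear_on sc sc (C (k - 1)) (C k) (s (k - 1))"
  using sl[of "k - 1"] by simp

lemma LC_s: "c \<in> LC C (k - 1) \<Longrightarrow> lmap (s (k - 1)) c \<in> LC C k"
  by (rule LC_lmap[OF sl'])

lemma keyL: assumes c: "c \<in> LC C (k - 1)"
  shows "lmap (h (k - 1)) c + lmap (d k) (lmap (s (k - 1)) c) = lmap (g (k - 1)) c + lmap (s (k - 1 - 1)) (- lmap (d (k - 1)) c)"
proof (rule poly_mapping_eqI)
  fix n
  have x: "Poly_Mapping.lookup c n \<in> C (k - 1)" using c by (simp add: LC_iff)
  show "Poly_Mapping.lookup (lmap (h (k - 1)) c + lmap (d k) (lmap (s (k - 1)) c)) n =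
        Poly_Mapping.lookup (lmap (g (k - 1)) c + lmap (s (k - 1 - 1)) (- lmap (d (k - 1)) c)) n"
    unfolding lookup_add using key[OF x] by (simp add: lookup_lmap0)
qed

lemma Fm_chain: "chain_map (tsc sc) (tsc sc) (torus_C C) (torus_d sc d g) (torus_C C) (torus_d sc d h) Fm"
  unfolding chain_map_def linear_on_def
proof (intro allI conjI ballI)
  fix k x assume "x \<in> torus_C C k"
  then obtain c b where x: "x = (c, b)" and c: "c \<in> LC C (k - 1)" and b: "b \<in> LC C k"
    by (rule pair_cases_T)
  show "Fm k x \<in> torus_C C k"
    unfolding x Fm_def torus_C_iff fst_conv snd_conv
    by (intro conjI LC_add LC_s c b)
  fix p show "Fm k (tsc sc p x) = tsc sc p (Fm k x)"
    unfolding x tsc_def fst_conv snd_conv Fm_def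
    by (simp add: lmap_lsc'[OF sl' c] lsc_add'[OF b LC_s[OF c]])
next
  fix k x y assume "x \<in> torus_C C k" "y \<in> torus_C C k"
  then obtain c b c' b' where x: "x = (c, b)" and c: "c \<in> LC C (k - 1)" and b: "b \<in> LC C k"
    and y: "y = (c', b')" and c': "c' \<in> LC C (k - 1)" and b': "b' \<in> LC C k"
    by (metis pair_cases_T)
  show "Fm k (x + y) = Fm k x + Fm k y"
    unfolding x y add_Pair Fm_def fst_conv snd_conv
    by (subst lmap_add'[OF sl' c c']) (simp add: algebra_simps)
next
  fix k x assume "x \<in> torus_C C k"
  then obtain c b where x: "x = (c, b)" and c: "c \<in> LC C (k - 1)" and b: "b \<in> LC C k"
    by (rule pair_cases_T)
  show "torus_d sc d h k (Fm k x) = Fm (k - 1) (torus_d sc d g k x)"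
    unfolding x Fm_def fst_conv snd_conv D_eq
    using keyL[OF c] by (simp add: lmap_add'[OF dlin b LC_s[OF c]] algebra_simps)
qed

lemma Gm_chain: "chain_map (tsc sc) (tsc sc) (torus_C C) (torus_d sc d h) (torus_C C) (torus_d sc d g) Gm"
  unfolding chain_map_def linear_on_def
proof (intro allI conjI ballI)
  fix k x assume "x \<in> torus_C C k"
  then obtain c b where x: "x = (c, b)" and c: "c \<in> LC C (k - 1)" and b: "b \<in> LC C k"
    by (rule pair_cases_T)
  show "Gm k x \<in> torus_C C k"
    unfolding x Gm_def torus_C_iff fst_conv snd_conv
    by (intro conjI LC_diff LC_s c b)
  fix p show "Gm k (tsc sc p x) = tsc sc p (Gm k x)"
    unfolding x tsc_def fst_conv snd_conv Gm_def
    by (simp add: lmap_lsc'[OF sl' c] lsc_diff'[OF b LC_s[OF c]])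
next
  fix k x y assume "x \<in> torus_C C k" "y \<in> torus_C C k"
  then obtain c b c' b' where x: "x = (c, b)" and c: "c \<in> LC C (k - 1)" and b: "b \<in> LC C k"
    and y: "y = (c', b')" and c': "c' \<in> LC C (k - 1)" and b': "b' \<in> LC C k"
    by (metis pair_cases_T)
  show "Gm k (x + y) = Gm k x + Gm k y"
    unfolding x y add_Pair Gm_def fst_conv snd_conv
    by (subst lmap_add'[OF sl' c c']) (simp add: algebra_simps)
next
  fix k x assume "x \<in> torus_C C k"
  then obtain c b where x: "x = (c, b)" and c: "c \<in> LC C (k - 1)" and b: "b \<in> LC C k"
    by (rule pair_cases_T)
  show "torus_d sc d g k (Gm k x) = Gm (k - 1) (torus_d sc d h k x)"
    unfolding x Gm_def fst_conv snd_conv D_eq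
    using keyL[OF c] by (simp add: lmap_diff'[OF dlin b LC_s[OF c]] algebra_simps)
qed

lemma tori_iso: "chain_iso (tsc sc) (tsc sc) (torus_C C) (torus_d sc d g) (torus_C C) (torus_d sc d h)"
  unfolding chain_iso_def
  by (rule exI[of _ Fm], rule exI[of _ Gm]) (simp add: Fm_chain Gm_chain Fm_def Gm_def)

end

end


theorem lemma2p6:
  fixes sc :: "'r::ring_1 \<Rightarrow> 'm::ab_group_add \<Rightarrow> 'm"
    and C :: "int \<Rightarrow> 'm set" and d :: "int \<Rightarrow> 'm \<Rightarrow> 'm"
  assumes "chain_complex sc C d"
  shows "(\<forall>h. chain_map sc sc C d C d h \<longrightarrow>
            chain_homotopic (tsc sc) (tsc sc) (torus_C C) (torus_d sc d h) (torus_C C) (torus_d sc d h)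
              (torus_ind h) (\<lambda>k. tsc sc lx) \<and>
            quasi_iso (tsc sc) (tsc sc) (torus_C C) (torus_d sc d h) (torus_C C) (torus_d sc d h)
              (torus_ind h))
       \<and> (\<forall>g h. chain_homotopic sc sc C d C d g h \<longrightarrow>
            chain_iso (tsc sc) (tsc sc) (torus_C C) (torus_d sc d g) (torus_C C) (torus_d sc d h))"
proof (intro conjI allI impI)
  fix h assume hm: "chain_map sc sc C d C d h"
  have hl: "\<And>k. linear_on sc sc (C k) (C k) (h k)" and hc: "\<And>k x. x \<in> C k \<Longrightarrow> d k (h k x) = h (k - 1) (d k x)"
    using hm by (auto simp: chain_map_def)
  have "\<forall>k. \<forall>x\<in>torus_C C k. torus_ind h k x - tsc sc lx x
          = torus_d sc d h (k + 1) (hs k x) + hs (k - 1) (torus_d sc d h k x)"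
  proof (intro allI ballI)
    fix k x assume "x \<in> torus_C C k"
    then obtain c b where x: "x = (c, b)" and c: "c \<in> LC C (k - 1)" and b: "b \<in> LC C k"
      by (rule pair_cases_T[OF assms])
    show "torus_ind h k x - tsc sc lx x = torus_d sc d h (k + 1) (hs k x) + hs (k - 1) (torus_d sc d h k x)"
      unfolding x by (rule htpy_eq[where h=h, OF assms hl hc c b])
  qed
  then show "chain_homotopic (tsc sc) (tsc sc) (torus_C C) (torus_d sc d h) (torus_C C) (torus_d sc d h)
              (torus_ind h) (\<lambda>k. tsc sc lx)"
    unfolding chain_homotopic_def
    using ind_chain[where h=h, OF assms hl hc] lx_chain[where h=h, OF assms hl hc] hs_lin[where h=h, OF assms hl hc] by blast
  show "quasi_iso (tsc sc) (tsc sc) (torus_C C) (torus_d sc d h) (torus_C C) (torus_d sc d h) (torus_ind h)"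
    by (rule ind_quasi[where h=h, OF assms hl hc])
next
  fix g h assume "chain_homotopic sc sc C d C d g h"
  then obtain s where gl: "\<And>k. linear_on sc sc (C k) (C k) (g k)"
    and hl: "\<And>k. linear_on sc sc (C k) (C k) (h k)"
    and sl: "\<And>k. linear_on sc sc (C k) (C (k + 1)) (s k)"
    and seq: "\<And>k x. x \<in> C k \<Longrightarrow> g k x - h k x = d (k + 1) (s k x) + s (k - 1) (d k x)"
    unfolding chain_homotopic_def chain_map_def by blast
  show "chain_iso (tsc sc) (tsc sc) (torus_C C) (torus_d sc d g) (torus_C C) (torus_d sc d h)"
    by (rule tori_iso[OF assms gl hl sl seq])
qed

end
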